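(* For positive scores $0<s_1\le\dots\le s_n$ and integer budget $B\ge1$, let $\mathbf h=\mathrm{RAS}(s_1,\dots,s_n;B)$. Then among all optimal allocations $\mathbf a\in\arg\min_{\mathbf a\in\mathcal A}\|\mathbf a\odot\mathbf s\|_\infty$, $\mathbf h$ minimizes the cardinality of the set $\arg\max_{i\in[n]}a_is_i$.
   Context: $\mathcal A=\{\mathbf a\in\mathbb N^n:\|\mathbf a\|_1=B\}$ ($\mathbb N$ includes $0$); $\odot$ is the entrywise product and $\mathbf e_i$ the $i$-th unit vector. RAS$(s_1,\dots,s_n;B)$ with sorted scores $s_1\le\dots\le s_n$: if $B=1$ return $\mathbf e_1$. Otherwise let $\mathbf a=\mathrm{RAS}(s_1,\dots,s_n;B-1)$; let $r=\min\{i:a_i=0\}$ if $a_n=0$, else $r=n$; let $M=\arg\min_{i\in[r]}\|(\mathbf a+\mathbf e_i)\odot\mathbf s\|_\infty$; choose any $j\in M$ minimizing the cardinality of $\arg\max_{i\in[r]}(a_i+e_{j,i})s_i$; return $\mathbf a+\mathbf e_j$. *)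

theory Defs
  imports Complex_Main
begin

text \<open>Vectors in N^n / R^n are functions on nat, indices 1..n.
  Allocations are zero outside {1..n}.\<close>

definition unitv :: "nat \<Rightarrow> nat \<Rightarrow> nat" where
  "unitv j = (\<lambda>i. if i = j then 1 else 0)"

definition allocs :: "nat \<Rightarrow> nat \<Rightarrow> (nat \<Rightarrow> nat) set" where
  "allocs n B = {a. (\<forall>i. i \<notin> {1..n} \<longrightarrow> a i = 0) \<and> (\<Sum>i\<in>{1..n}. a i) = B}"

definition wnorm :: "nat set \<Rightarrow> (nat \<Rightarrow> real) \<Rightarrow> (nat \<Rightarrow> nat) \<Rightarrow> real" where
  "wnorm I s a = Max ((\<lambda>i. \<bar>real (a i) * s i\<bar>) ` I)"

definition argmax_set :: "nat set \<Rightarrow> (nat \<Rightarrow> real) \<Rightarrow> (nat \<Rightarrow> nat) \<Rightarrow> nat set" where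
  "argmax_set I s a = {i \<in> I. \<forall>k\<in>I. real (a k) * s k \<le> real (a i) * s i}"

text \<open>RAS is nondeterministic (ties are broken arbitrarily), so it is modelled as a
  relation: ras s n B h means h is a possible output of RAS(s_1..s_n; B).\<close>
inductive ras :: "(nat \<Rightarrow> real) \<Rightarrow> nat \<Rightarrow> nat \<Rightarrow> (nat \<Rightarrow> nat) \<Rightarrow> bool"
  for s :: "nat \<Rightarrow> real" and n :: nat where
  base: "ras s n 1 (unitv 1)"
| step: "\<lbrakk> ras s n B a;
           r = (if a n = 0 then (LEAST i. 1 \<le> i \<and> a i = 0) else n);
           M = {j \<in> {1..r}. \<forall>k\<in>{1..r}. wnorm {1..n} s (\<lambda>i. a i + unitv j i)
                                         \<le> wnorm {1..n} s (\<lambda>i. a i + unitv k i)};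
           j \<in> M;
           \<forall>k\<in>M. card (argmax_set {1..r} s (\<lambda>i. a i + unitv j i))
                  \<le> card (argmax_set {1..r} s (\<lambda>i. a i + unitv k i)) \<rbrakk>
         \<Longrightarrow> ras s n (Suc B) (\<lambda>i. a i + unitv j i)"

end

theory Submission
  imports Defs
begin

lemma wn_ge: "finite I \<Longrightarrow> i \<in> I \<Longrightarrow> \<bar>real (a i) * s i\<bar> \<le> wnorm I s a"
  unfolding wnorm_def by (rule Max_ge) auto

lemma wn_le: "finite I \<Longrightarrow> I \<noteq> {} \<Longrightarrow> (\<And>i. i \<in> I \<Longrightarrow> \<bar>real (a i) * s i\<bar> \<le> X) \<Longrightarrow> wnorm I s a \<le> X"
  unfolding wnorm_def by (subst Max_le_iff) auto

lemma wn_att: "finite I \<Longrightarrow> I \<noteq> {} \<Longrightarrow> \<exists>i\<in>I. wnorm I s a = \<bar>real (a i) * s i\<bar>"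
proof -
  assume "finite I" "I \<noteq> {}"
  then have "Max ((\<lambda>i. \<bar>real (a i) * s i\<bar>) ` I) \<in> (\<lambda>i. \<bar>real (a i) * s i\<bar>) ` I"
    by (intro Max_in) auto
  then show ?thesis unfolding wnorm_def by auto
qed

lemma unitv_sum: "j \<in> {1..n} \<Longrightarrow> (\<Sum>i\<in>{1..n}. unitv j i) = 1"
  unfolding unitv_def by (simp add: sum.delta)

lemma inv:
  assumes n1: "n \<ge> 1"
    and pos: "\<forall>i\<in>{1..n}. 0 < s i"
    and mono: "\<forall>i j. 1 \<le> i \<and> i \<le> j \<and> j \<le> n \<longrightarrow> s i \<le> s j"
    and "ras s n B h"
  shows "h \<in> allocs n B \<and> (\<forall>i\<in>{1..n}. wnorm {1..n} s h \<le> (real (h i) + 1) * s i)"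
  using assms(4)
proof (induction rule: ras.induct)
  case base
  have al: "unitv 1 \<in> allocs n 1"
    using n1 unfolding allocs_def by (auto simp: unitv_sum) (auto simp: unitv_def)
  have "wnorm {1..n} s (unitv 1) \<le> (real (unitv 1 i) + 1) * s i" if i: "i \<in> {1..n}" for i
  proof -
    have "wnorm {1..n} s (unitv 1) \<le> s 1"
    proof (rule wn_le)
      show "{1..n} \<noteq> {}" using n1 by auto
      fix k assume "k \<in> {1..n}"
      moreover have "0 < s 1" using pos n1 by auto
      ultimately show "\<bar>real (unitv 1 k) * s k\<bar> \<le> s 1"
        by (cases "k = 1") (simp_all add: unitv_def)
    qed simp
    also have "s 1 \<le> s i" using mono i by auto
    also have "\<dots> \<le> (real (unitv 1 i) + 1) * s i"
    proof -
      have "0 < s i" using pos i by auto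
      then show ?thesis by (simp add: algebra_simps)
    qed
    finally show ?thesis .
  qed
  then show ?case using al by auto
next
  case (step B a r M j)
  have IH1: "a \<in> allocs n B" and IH2: "\<forall>i\<in>{1..n}. wnorm {1..n} s a \<le> (real (a i) + 1) * s i"
    using step.IH by auto
  have rprop: "1 \<le> r \<and> r \<le> n \<and> (r < n \<longrightarrow> a r = 0)"
  proof (cases "a n = 0")
    case True
    then have r: "r = (LEAST i. 1 \<le> i \<and> a i = 0)" using step.hyps by simp
    have "1 \<le> r \<and> a r = 0" unfolding r by (rule LeastI[of _ n]) (use True n1 in auto)
    moreover have "r \<le> n" unfolding r by (rule Least_le) (use True n1 in auto)
    ultimately show ?thesis by auto
  next
    case False
    then show ?thesis using step.hyps n1 by simp
  qed
  have jM: "j \<in> {1..r}" and jmin: "\<And>k. k \<in> {1..r} \<Longrightarrow> wnorm {1..n} s (\<lambda>i. a i + unitv j i) \<le> wnorm {1..n} s (\<lambda>i. a i + unitv k i)"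
    using step.hyps by auto
  have jn: "j \<in> {1..n}" using jM rprop by auto
  have key: "wnorm {1..n} s (\<lambda>i. a i + unitv k i) \<le> (real (a k) + 1) * s k" if k: "k \<in> {1..n}" for k
  proof (rule wn_le)
    show "{1..n} \<noteq> {}" using n1 by auto
    fix i assume i: "i \<in> {1..n}"
    show "\<bar>real (a i + unitv k i) * s i\<bar> \<le> (real (a k) + 1) * s k"
    proof (cases "i = k")
      case True
      have "0 < s k" using pos k by auto
      then show ?thesis using True by (simp add: unitv_def algebra_simps)
    next
      case False
      have "\<bar>real (a i) * s i\<bar> \<le> wnorm {1..n} s a" by (rule wn_ge) (use i in auto)
      also have "\<dots> \<le> (real (a k) + 1) * s k" using IH2 k by auto
      finally show ?thesis using False by (simp add: unitv_def)
    qed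
  qed simp
  have al: "(\<lambda>i. a i + unitv j i) \<in> allocs n (Suc B)"
  proof -
    have "(\<Sum>i\<in>{1..n}. a i + unitv j i) = (\<Sum>i\<in>{1..n}. a i) + (\<Sum>i\<in>{1..n}. unitv j i)"
      by (rule sum.distrib)
    also have "\<dots> = Suc B" using IH1 unitv_sum[OF jn] unfolding allocs_def by simp
    finally show ?thesis using IH1 jn unfolding allocs_def by (auto simp: unitv_def)
  qed
  have "wnorm {1..n} s (\<lambda>i. a i + unitv j i) \<le> (real (a i + unitv j i) + 1) * s i"
    if i: "i \<in> {1..n}" for i
  proof (cases "i \<le> r")
    case True
    have "wnorm {1..n} s (\<lambda>i. a i + unitv j i) \<le> wnorm {1..n} s (\<lambda>ia. a ia + unitv i ia)"
      using jmin True i by auto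
    also have "\<dots> \<le> (real (a i) + 1) * s i" using key i by auto
    also have "\<dots> \<le> (real (a i + unitv j i) + 1) * s i"
    proof -
      have "0 < s i" using pos i by auto
      then show ?thesis by (intro mult_right_mono) auto
    qed
    finally show ?thesis .
  next
    case False
    then have rn: "r < n" "a r = 0" "1 \<le> r" using rprop i by auto
    have "wnorm {1..n} s (\<lambda>i. a i + unitv j i) \<le> wnorm {1..n} s (\<lambda>ia. a ia + unitv r ia)"
      using jmin rn by auto
    also have "\<dots> \<le> (real (a r) + 1) * s r" using rn by (intro key) auto
    also have "\<dots> = s r" using rn by simp
    also have "\<dots> \<le> s i" using mono rn False i by auto
    also have "\<dots> \<le> (real (a i + unitv j i) + 1) * s i"
    proof -
      have "0 < s i" using pos i by auto
      then show ?thesis by (simp add: algebra_simps)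
    qed
    finally show ?thesis .
  qed
  then show ?case using al by auto
qed

lemma am_eq:
  assumes "finite I" "I \<noteq> {}" "\<forall>i\<in>I. 0 < s i"
  shows "argmax_set I s a = {i\<in>I. real (a i) * s i = wnorm I s a}"
proof -
  have e: "\<And>i. i \<in> I \<Longrightarrow> \<bar>real (a i) * s i\<bar> = real (a i) * s i" using assms(3) by auto
  have "i \<in> argmax_set I s a \<longleftrightarrow> i \<in> {i\<in>I. real (a i) * s i = wnorm I s a}" for i
  proof
    assume i: "i \<in> argmax_set I s a"
    then have iI: "i \<in> I" and le: "\<forall>k\<in>I. real (a k) * s k \<le> real (a i) * s i"
      unfolding argmax_set_def by auto
    have "wnorm I s a \<le> real (a i) * s i" using le e by (intro wn_le assms) auto
    moreover have "real (a i) * s i \<le> wnorm I s a" using wn_ge[OF assms(1) iI, of a s] e[OF iI] by simp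
    ultimately show "i \<in> {i\<in>I. real (a i) * s i = wnorm I s a}" using iI by auto
  next
    assume i: "i \<in> {i\<in>I. real (a i) * s i = wnorm I s a}"
    then have "\<forall>k\<in>I. real (a k) * s k \<le> real (a i) * s i"
      using wn_ge[OF assms(1), of _ a s] e by fastforce
    then show "i \<in> argmax_set I s a" using i unfolding argmax_set_def by auto
  qed
  then show ?thesis by blast
qed

lemma card_ind: "A \<subseteq> I \<Longrightarrow> finite I \<Longrightarrow> (\<Sum>i\<in>I. (if i \<in> A then 1 else 0::real)) = real (card A)"
  by (simp add: sum.If_cases Int_absorb1)

theorem lemmaC3:
  fixes s :: "nat \<Rightarrow> real" and n B :: nat and h :: "nat \<Rightarrow> nat"
  assumes "n \<ge> 1"
    and "\<forall>i\<in>{1..n}. 0 < s i"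
    and "\<forall>i j. 1 \<le> i \<and> i \<le> j \<and> j \<le> n \<longrightarrow> s i \<le> s j"
    and "B \<ge> 1"
    and "ras s n B h"
  shows "h \<in> allocs n B
         \<and> (\<forall>a\<in>allocs n B. wnorm {1..n} s h \<le> wnorm {1..n} s a)
         \<and> (\<forall>a\<in>allocs n B. (\<forall>b\<in>allocs n B. wnorm {1..n} s a \<le> wnorm {1..n} s b)
              \<longrightarrow> card (argmax_set {1..n} s h) \<le> card (argmax_set {1..n} s a))"
proof -
  let ?I = "{1..n::nat}"
  have fI: "finite ?I" and neI: "?I \<noteq> {}" using assms(1) by auto
  have pos: "\<forall>i\<in>?I. 0 < s i" using assms(2) .
  have I1: "h \<in> allocs n B" and I2: "\<forall>i\<in>?I. wnorm ?I s h \<le> (real (h i) + 1) * s i"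
    using inv[OF assms(1,2,3,5)] by auto
  define V where "V = wnorm ?I s h"
  obtain i0 where i0: "i0 \<in> ?I" "V = real (h i0) * s i0"
    using wn_att[OF fI neI, of s h] pos unfolding V_def by force
  have sumB: "\<And>b. b \<in> allocs n B \<Longrightarrow> (\<Sum>i\<in>?I. b i) = B" unfolding allocs_def by auto
  have ent: "\<And>b i. i \<in> ?I \<Longrightarrow> real (b i) * s i \<le> wnorm ?I s b"
    using wn_ge[OF fI] pos by (metis abs_of_pos less_eq_real_def abs_ge_self order_trans)
  have opt: "V \<le> wnorm ?I s b" if b: "b \<in> allocs n B" for b
  proof (rule ccontr)
    assume "\<not> V \<le> wnorm ?I s b"
    then have lt: "wnorm ?I s b < V" by simp
    have "\<forall>i\<in>?I. b i \<le> h i"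
    proof
      fix i assume i: "i \<in> ?I"
      have "real (b i) * s i < (real (h i) + 1) * s i"
        using ent[OF i, of b] lt I2 i unfolding V_def by fastforce
      then have "real (b i) < real (h i) + 1" using pos i by (simp add: mult_less_cancel_right_pos)
      then show "b i \<le> h i" by linarith
    qed
    moreover have "b i0 < h i0"
    proof -
      have "real (b i0) * s i0 < real (h i0) * s i0" using ent[OF i0(1), of b] lt i0 by linarith
      then have "real (b i0) < real (h i0)" using pos i0 by (simp add: mult_less_cancel_right_pos)
      then show ?thesis by linarith
    qed
    ultimately have "(\<Sum>i\<in>?I. b i) < (\<Sum>i\<in>?I. h i)"
      using i0(1) by (intro sum_strict_mono_ex1 fI) auto
    then show False using sumB[OF b] sumB[OF I1] by simp
  qed
  have crd: "card (argmax_set ?I s h) \<le> card (argmax_set ?I s b)"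
    if b: "b \<in> allocs n B" and bopt: "\<forall>c\<in>allocs n B. wnorm ?I s b \<le> wnorm ?I s c" for b
  proof -
    have Wb: "wnorm ?I s b = V" using bopt I1 opt[OF b] unfolding V_def by (meson order_antisym)
    define Ab where "Ab = argmax_set ?I s b"
    define Ah where "Ah = argmax_set ?I s h"
    have Ab: "Ab = {i\<in>?I. real (b i) * s i = V}" unfolding Ab_def using am_eq[OF fI neI pos] Wb by simp
    have Ah: "Ah = {i\<in>?I. real (h i) * s i = V}" unfolding Ah_def V_def using am_eq[OF fI neI pos] by simp
    have d: "real (b i) - real (h i) \<le> (if i \<in> Ab then 1 else 0) - (if i \<in> Ah then 1 else 0)"
      if i: "i \<in> ?I" for i
    proof -
      have si: "0 < s i" using pos i by auto
      have bV: "real (b i) * s i \<le> V" using ent[OF i, of b] Wb by simp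
      have hV: "real (h i) * s i \<le> V" using ent[OF i, of h] unfolding V_def by simp
      have hV2: "V \<le> (real (h i) + 1) * s i" using I2 i unfolding V_def by auto
      have c1: "real (b i) \<le> real (h i) + 1"
        using bV hV2 si by (metis mult_le_cancel_right_pos order_trans)
      have c2: "i \<notin> Ab \<Longrightarrow> real (b i) \<le> real (h i)"
      proof -
        assume "i \<notin> Ab"
        then have "real (b i) * s i < (real (h i) + 1) * s i" using Ab i bV hV2 by auto
        then have "real (b i) < real (h i) + 1" using si by (simp add: mult_less_cancel_right_pos)
        then have "b i \<le> h i" by linarith
        then show ?thesis by simp
      qed
      have c3: "i \<in> Ah \<Longrightarrow> real (b i) \<le> real (h i)"
      proof -
        assume "i \<in> Ah"
        then have "real (b i) * s i \<le> real (h i) * s i" using Ah bV by auto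
        then show ?thesis using si by (simp add: mult_le_cancel_right_pos)
      qed
      have c4: "i \<in> Ah \<Longrightarrow> i \<notin> Ab \<Longrightarrow> real (b i) \<le> real (h i) - 1"
      proof -
        assume "i \<in> Ah" "i \<notin> Ab"
        then have "real (b i) * s i < real (h i) * s i" using Ah Ab i bV by auto
        then have "real (b i) < real (h i)" using si by (simp add: mult_less_cancel_right_pos)
        then have "b i + 1 \<le> h i" by linarith
        then have "real (b i) + 1 \<le> real (h i)" by (metis of_nat_1 of_nat_add of_nat_le_iff)
        then show ?thesis by linarith
      qed
      show ?thesis using c1 c2 c3 c4 by auto
    qed
    have "(\<Sum>i\<in>?I. real (b i) - real (h i)) \<le> (\<Sum>i\<in>?I. (if i \<in> Ab then 1 else 0) - (if i \<in> Ah then 1 else 0::real))"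
      using d by (intro sum_mono) auto
    moreover have "(\<Sum>i\<in>?I. real (b i) - real (h i)) = 0"
      using sumB[OF b] sumB[OF I1] by (simp add: sum_subtractf flip: of_nat_sum)
    moreover have "(\<Sum>i\<in>?I. (if i \<in> Ab then 1 else 0) - (if i \<in> Ah then 1 else 0::real)) = real (card Ab) - real (card Ah)"
    proof -
      have "Ab \<subseteq> ?I" "Ah \<subseteq> ?I" using Ab Ah by auto
      then show ?thesis using card_ind[OF _ fI, of Ab] card_ind[OF _ fI, of Ah] by (simp add: sum_subtractf)
    qed
    ultimately show ?thesis unfolding Ab_def Ah_def by linarith
  qed
  show ?thesis using I1 opt crd unfolding V_def by blast
qed

end
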